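(* Let $n\ge 2$ be a power of $2$ and let $\mathcal{T}$ be a standard single-elimination tournament with $n$ players. Then for every scoring system $\sigma$ of $\mathcal{T}$ we have $\dim(\mathcal{T},\sigma)=n/2$. Moreover, for every such $n$ there exists a set of $n/2$ brackets of $\mathcal{T}$ which is $\sigma$-resolving for every scoring system $\sigma$.
   Context: A single-elimination tournament is a finite directed graph $\mathcal{T}$ such that: (a) $\mathcal{T}$ has exactly one sink (vertex with no out-neighbours); (b) every non-sink vertex has exactly one out-neighbour; (c) $\mathcal{T}$ has no directed cycles; (d) $|N^-(v)|\ne 1$ for every vertex $v$, where $N^-(v)$ denotes the set of in-neighbours of $v$. The players $P(\mathcal{T})$ are the sources (vertices with no in-neighbours) and the matches are $M(\mathcal{T})=V(\mathcal{T})\setminus P(\mathcal{T})$. $\mathcal{T}$ is standard if it is obtained from a complete binary tree by orienting all edges towards its center (root). A bracket is a function $B:V(\mathcal{T})\to P(\mathcal{T})$ with $B(a)=a$ for every player $a$ and $B(x)\in\{B(u):u\in N^-(x)\}$ for every match $x$. A scoring system is any function $\sigma:M(\mathcal{T})\to\mathbb{R}_{>0}$. For brackets $B,B'$ let $\mathrm{score}_\sigma(B,B')=\sum_{x\in M(\mathcal{T}):\,B(x)=B'(x)}\sigma(x)$. A set of brackets $\mathcal{B}$ is $\sigma$-resolving if for every pair of distinct brackets $B\ne B'$ there is $B_i\in\mathcal{B}$ with $\mathrm{score}_\sigma(B_i,B)\ne\mathrm{score}_\sigma(B_i,B')$. $\dim(\mathcal{T},\sigma)$ denotes the minimum size of a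 $\sigma$-resolving set. *)

theory Defs
  imports Complex_Main
begin

definition in_nbrs :: "('a \<times> 'a) set \<Rightarrow> 'a \<Rightarrow> 'a set" where
  "in_nbrs E v = {u. (u, v) \<in> E}"

definition players :: "'a set \<Rightarrow> ('a \<times> 'a) set \<Rightarrow> 'a set" where
  "players V E = {v \<in> V. in_nbrs E v = {}}"

definition matches :: "'a set \<Rightarrow> ('a \<times> 'a) set \<Rightarrow> 'a set" where
  "matches V E = V - players V E"

text \<open>Complete binary tree of depth k: nodes are boolean words of length at most k,
  the root is the empty word; every edge is oriented from a child (xs @ [b]) to its
  parent xs, i.e. towards the root.\<close>

definition cbt_nodes :: "nat \<Rightarrow> bool list set" where
  "cbt_nodes k = {xs. length xs \<le> k}"

definition cbt_edges :: "(bool list \<times> bool list) set" where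
  "cbt_edges = {(xs @ [b], xs) | xs b. True}"

definition standard_tournament :: "'a set \<Rightarrow> ('a \<times> 'a) set \<Rightarrow> bool" where
  "standard_tournament V E \<longleftrightarrow> E \<subseteq> V \<times> V \<and>
     (\<exists>k f. bij_betw f V (cbt_nodes k) \<and>
        (\<forall>u\<in>V. \<forall>v\<in>V. (u, v) \<in> E \<longleftrightarrow> (f u, f v) \<in> cbt_edges))"

text \<open>Brackets are functions V \<rightarrow> players, taken extensionally (undefined outside V).\<close>

definition brackets :: "'a set \<Rightarrow> ('a \<times> 'a) set \<Rightarrow> ('a \<Rightarrow> 'a) set" where
  "brackets V E = {B. (\<forall>v. v \<notin> V \<longrightarrow> B v = undefined)
      \<and> (\<forall>v\<in>V. B v \<in> players V E)
      \<and> (\<forall>a\<in>players V E. B a = a)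
      \<and> (\<forall>x\<in>matches V E. B x \<in> B ` in_nbrs E x)}"

definition scoring_system :: "'a set \<Rightarrow> ('a \<times> 'a) set \<Rightarrow> ('a \<Rightarrow> real) \<Rightarrow> bool" where
  "scoring_system V E \<sigma> \<longleftrightarrow> (\<forall>x\<in>matches V E. \<sigma> x > 0)"

definition score :: "'a set \<Rightarrow> ('a \<times> 'a) set \<Rightarrow> ('a \<Rightarrow> real) \<Rightarrow> ('a \<Rightarrow> 'a) \<Rightarrow> ('a \<Rightarrow> 'a) \<Rightarrow> real" where
  "score V E \<sigma> B B' = (\<Sum>x\<in>{x \<in> matches V E. B x = B' x}. \<sigma> x)"

definition resolving :: "'a set \<Rightarrow> ('a \<times> 'a) set \<Rightarrow> ('a \<Rightarrow> real) \<Rightarrow> ('a \<Rightarrow> 'a) set \<Rightarrow> bool" where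
  "resolving V E \<sigma> S \<longleftrightarrow> S \<subseteq> brackets V E \<and>
     (\<forall>B\<in>brackets V E. \<forall>B'\<in>brackets V E. B \<noteq> B' \<longrightarrow>
        (\<exists>Bi\<in>S. score V E \<sigma> Bi B \<noteq> score V E \<sigma> Bi B'))"

definition tdim :: "'a set \<Rightarrow> ('a \<times> 'a) set \<Rightarrow> ('a \<Rightarrow> real) \<Rightarrow> nat" where
  "tdim V E \<sigma> = (LEAST m. \<exists>S. finite S \<and> card S = m \<and> resolving V E \<sigma> S)"

end

theory Submission
  imports Defs "HOL-Library.Sublist"
begin


definition cE :: "nat \<Rightarrow> (bool list \<times> bool list) set" where
  "cE K = {(a,b). a \<in> cbt_nodes K \<and> b \<in> cbt_nodes K \<and> (a,b) \<in> cbt_edges}"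

lemma in_cE: "(u, v) \<in> cE K \<longleftrightarrow> length v < K \<and> (u = v@[False] \<or> u = v@[True])"
proof -
  have "(u, v) \<in> cE K \<longleftrightarrow> length u \<le> K \<and> length v \<le> K \<and> (\<exists>b. u = v@[b])"
    unfolding cE_def cbt_nodes_def cbt_edges_def by blast
  also have "\<dots> \<longleftrightarrow> length v < K \<and> (u = v@[False] \<or> u = v@[True])"
  proof
    assume "length u \<le> K \<and> length v \<le> K \<and> (\<exists>b. u = v@[b])"
    then obtain b where "length u \<le> K" "u = v@[b]" by blast
    then show "length v < K \<and> (u = v@[False] \<or> u = v@[True])" by (cases b) auto
  next
    assume "length v < K \<and> (u = v@[False] \<or> u = v@[True])"
    then show "length u \<le> K \<and> length v \<le> K \<and> (\<exists>b. u = v@[b])" by auto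
  qed
  finally show ?thesis .
qed

lemma in_nbrs_cE: "in_nbrs (cE K) v = (if length v < K then {v@[False], v@[True]} else {})"
  unfolding in_nbrs_def in_cE by auto

lemma players_cE: "players (cbt_nodes K) (cE K) = {v. length v = K}"
  unfolding players_def in_nbrs_cE cbt_nodes_def by auto

lemma matches_cE: "matches (cbt_nodes K) (cE K) = {v. length v < K}"
  unfolding matches_def players_cE unfolding cbt_nodes_def by auto

lemma finite_len_le: "finite {xs::bool list. length xs \<le> n}"
  using finite_lists_length_le[of "UNIV::bool set" n] by simp

lemma card_len_eq: "card {xs::bool list. length xs = n} = 2 ^ n"
  using card_lists_length_eq[of "UNIV::bool set" n] by simp

lemma finite_len_less: "finite {xs::bool list. length xs < n}"
  by (rule finite_subset[OF _ finite_len_le[of n]]) auto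

lemma brackets_cE: "B \<in> brackets (cbt_nodes K) (cE K) \<longleftrightarrow>
   (\<forall>v. K < length v \<longrightarrow> B v = undefined) \<and> (\<forall>v. length v \<le> K \<longrightarrow> length (B v) = K)
   \<and> (\<forall>a. length a = K \<longrightarrow> B a = a)
   \<and> (\<forall>x. length x < K \<longrightarrow> B x = B (x@[False]) \<or> B x = B (x@[True]))"
proof -
  have 1: "(\<forall>v. v \<notin> cbt_nodes K \<longrightarrow> B v = undefined) \<longleftrightarrow> (\<forall>v. K < length v \<longrightarrow> B v = undefined)"
    unfolding cbt_nodes_def by (auto simp: not_le)
  have 2: "(\<forall>v\<in>cbt_nodes K. B v \<in> players (cbt_nodes K) (cE K)) \<longleftrightarrow> (\<forall>v. length v \<le> K \<longrightarrow> length (B v) = K)"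
    unfolding players_cE unfolding cbt_nodes_def by auto
  have 3: "(\<forall>a\<in>players (cbt_nodes K) (cE K). B a = a) \<longleftrightarrow> (\<forall>a. length a = K \<longrightarrow> B a = a)"
    unfolding players_cE by auto
  have 4: "(\<forall>x\<in>matches (cbt_nodes K) (cE K). B x \<in> B ` in_nbrs (cE K) x) \<longleftrightarrow>
     (\<forall>x. length x < K \<longrightarrow> B x = B (x@[False]) \<or> B x = B (x@[True]))"
    unfolding matches_cE in_nbrs_cE by auto
  show ?thesis unfolding brackets_def using 1 2 3 4 by blast
qed

lemma prefix_eq_len: "prefix a b \<Longrightarrow> length a = length b \<Longrightarrow> a = b"
  by (auto simp: prefix_def)

lemma prefix_snoc_conflict: "prefix (v@[b]) p \<Longrightarrow> prefix (v@[c]) p \<Longrightarrow> b = c"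
  by (metis nth_append_length prefix_def nth_append length_append_singleton lessI)

abbreviation brk :: "nat \<Rightarrow> (bool list \<Rightarrow> bool list) \<Rightarrow> bool" where
  "brk K B \<equiv> B \<in> brackets (cbt_nodes K) (cE K)"

lemma brk_len: assumes "brk K B" "length v \<le> K" shows "length (B v) = K"
  using assms unfolding brackets_cE by blast

lemma brk_leaf: assumes "brk K B" "length v = K" shows "B v = v"
  using assms unfolding brackets_cE by blast

lemma brk_undef: assumes "brk K B" "K < length v" shows "B v = undefined"
  using assms unfolding brackets_cE by blast

lemma brk_match: assumes "brk K B" "length x < K" shows "B x = B (x@[False]) \<or> B x = B (x@[True])"
  using assms unfolding brackets_cE by blast

lemma brk_prefix: assumes "brk K B" "length v \<le> K" shows "prefix v (B v)"
proof -
  have "\<forall>v. length v \<le> K \<longrightarrow> K - length v = d \<longrightarrow> prefix v (B v)" for d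
  proof (induction d)
    case 0
    then show ?case using brk_leaf[OF assms(1)] by auto
  next
    case (Suc d)
    show ?case
    proof (intro allI impI)
      fix v :: "bool list" assume h: "length v \<le> K" "K - length v = Suc d"
      then have lt: "length v < K" by simp
      have ih: "prefix (v@[b]) (B (v@[b]))" for b
        using Suc.IH h by auto
      from brk_match[OF assms(1) lt] show "prefix v (B v)"
        using ih by (metis prefix_snocD strict_prefix_def)
    qed
  qed
  then show ?thesis using assms(2) by blast
qed

lemma brk_mono: assumes "brk K B" "prefix v v'" "length v' \<le> K" "prefix v' (B v)"
  shows "B v' = B v"
proof -
  have "\<forall>v. prefix v v' \<longrightarrow> length v' - length v = d \<longrightarrow> prefix v' (B v) \<longrightarrow> B v' = B v" for d
  proof (induction d)
    case 0
    then show ?case by (metis prefix_eq_len diff_is_0_eq prefix_length_le le_antisym)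
  next
    case (Suc d)
    show ?case
    proof (intro allI impI)
      fix v assume h: "prefix v v'" "length v' - length v = Suc d" "prefix v' (B v)"
      obtain b r where vr: "v' = v @ b # r"
        using h(1,2) by (metis Suc_neq_Zero append_Nil2 diff_self_eq_0 neq_Nil_conv prefix_def)
      have lt: "length v < K" using vr assms(3) by simp
      have p1: "prefix (v@[b]) (B v)" using h(3) vr by (metis append.assoc append_Cons append_Nil prefix_def)
      have "B v = B (v@[b])"
      proof -
        have "prefix (v@[\<not>b]) (B (v@[\<not>b]))" using brk_prefix[OF assms(1)] lt by simp
        then have "B v \<noteq> B (v@[\<not>b])" using p1 prefix_snoc_conflict[of v b "B v" "\<not>b"] by auto
        then show ?thesis using brk_match[OF assms(1) lt] by (cases b) auto
      qed
      moreover have "B v' = B (v@[b])"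
      proof (rule Suc.IH[rule_format])
        show "prefix (v@[b]) v'" using vr by (simp add: prefix_def)
        show "length v' - length (v@[b]) = d" using vr h(2) by simp
        show "prefix v' (B (v@[b]))" using h(3) \<open>B v = B (v@[b])\<close> by simp
      qed
      ultimately show "B v' = B v" by simp
    qed
  qed
  then show ?thesis using assms by blast
qed

definition G0 :: "nat \<Rightarrow> bool list \<Rightarrow> bool list" where
  "G0 K v = (if length v \<le> K then v @ replicate (K - length v) False else undefined)"

definition force :: "nat \<Rightarrow> (bool list \<Rightarrow> bool list) \<Rightarrow> bool list \<Rightarrow> bool list \<Rightarrow> bool list" where
  "force K G c v = (if length v \<le> K \<and> prefix v c then c else G v)"

lemma G0_step: "length x < K \<Longrightarrow> G0 K x = G0 K (x @ [False])"
proof -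
  assume lt: "length x < K"
  have e: "K - length x = Suc (K - length (x@[False]))" using lt by simp
  have "x @ replicate (K - length x) False = (x @ [False]) @ replicate (K - length (x@[False])) False"
    unfolding e replicate_Suc by simp
  then show ?thesis using lt unfolding G0_def by simp
qed

lemma brk_G0: "brk K (G0 K)"
  unfolding brackets_cE
proof (intro conjI allI impI)
  fix v :: "bool list" assume "K < length v" then show "G0 K v = undefined" by (simp add: G0_def)
next
  fix v :: "bool list" assume "length v \<le> K" then show "length (G0 K v) = K" by (simp add: G0_def)
next
  fix v :: "bool list" assume "length v = K" then show "G0 K v = v" by (simp add: G0_def)
next
  fix x :: "bool list" assume "length x < K" then show "G0 K x = G0 K (x @ [False]) \<or> G0 K x = G0 K (x @ [True])"
    using G0_step by blast
qed

lemma brk_force: assumes "brk K G" "length c = K" shows "brk K (force K G c)"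
  unfolding brackets_cE
proof (intro conjI allI impI)
  fix v :: "bool list" assume "K < length v" then show "force K G c v = undefined"
    using brk_undef[OF assms(1)] by (simp add: force_def)
next
  fix v :: "bool list" assume "length v \<le> K" then show "length (force K G c v) = K"
    using brk_len[OF assms(1)] assms(2) by (simp add: force_def)
next
  fix a :: "bool list" assume "length a = K" then show "force K G c a = a"
    using brk_leaf[OF assms(1)] assms(2) prefix_eq_len[of a c] by (auto simp: force_def)
next
  fix x :: "bool list" assume lt: "length x < K"
  show "force K G c x = force K G c (x @ [False]) \<or> force K G c x = force K G c (x @ [True])"
  proof (cases "prefix x c")
    case True
    then have "prefix (x @ [c ! length x]) c" using append_one_prefix lt assms(2) by auto
    then have "force K G c (x @ [c ! length x]) = c" using lt by (auto simp: force_def)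
    moreover have "force K G c x = c" using True lt by (auto simp: force_def)
    ultimately show ?thesis by (cases "c ! length x") auto
  next
    case False
    then have "\<not> prefix (x@[b]) c" for b by (meson prefix_order.dual_order.trans prefix_def append.assoc prefixI)
    then show ?thesis using False brk_match[OF assms(1) lt] by (simp add: force_def)
  qed
qed

definition LL :: "nat \<Rightarrow> bool list set" where "LL K = (\<lambda>w. False # w) ` {w. length w = K - 1}"
definition RR :: "nat \<Rightarrow> bool list set" where "RR K = (\<lambda>w. True # w) ` {w. length w = K - 1}"

lemma card_LL: "card (LL K) = 2 ^ (K - 1)"
  unfolding LL_def by (subst card_image) (auto simp: inj_on_def card_len_eq)

lemma score_sum: "score V E \<sigma> X B = (\<Sum>x\<in>{x \<in> matches V E. X x = B x}. \<sigma> x)"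
  unfolding score_def by simp

lemma lower_cE:
  assumes K: "1 \<le> K" and res: "resolving (cbt_nodes K) (cE K) \<sigma> S" and fin: "finite S"
  shows "2 ^ (K - 1) \<le> card S"
proof -
  define ch where "ch = (\<lambda>X. X []) ` S"
  have key: "\<exists>X\<in>S. X [] = l \<or> X [] = r" if l: "l \<in> LL K" and r: "r \<in> RR K" for l r
  proof -
    have ll: "length l = K" and lr: "length r = K" using l r K by (auto simp: LL_def RR_def)
    define Bl where "Bl = force K (force K (G0 K) r) l"
    define Br where "Br = force K (force K (G0 K) l) r"
    have bl: "brk K Bl" unfolding Bl_def by (intro brk_force brk_G0 ll lr)
    have br: "brk K Br" unfolding Br_def by (intro brk_force brk_G0 ll lr)
    have bl0: "Bl [] = l" and br0: "Br [] = r" by (auto simp: Bl_def Br_def force_def)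
    have lr_ne: "l \<noteq> r" using l r by (auto simp: LL_def RR_def)
    have agree: "Bl x = Br x" if xne: "x \<noteq> []" for x
    proof -
      obtain a x' where x: "x = a # x'" using xne by (cases x) auto
      obtain wl wr where lw: "l = False # wl" and rw: "r = True # wr" using l r by (auto simp: LL_def RR_def)
      have np: "\<not> (prefix x l \<and> prefix x r)"
      proof
        assume "prefix x l \<and> prefix x r"
        then have "prefix (a # x') (False # wl)" "prefix (a # x') (True # wr)" using x lw rw by auto
        then show False by (simp add: prefix_def)
      qed
      have e1: "Bl x = (if length x \<le> K \<and> prefix x l then l else if length x \<le> K \<and> prefix x r then r else G0 K x)"
        by (simp only: Bl_def force_def)
      have e2: "Br x = (if length x \<le> K \<and> prefix x r then r else if length x \<le> K \<and> prefix x l then l else G0 K x)"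
        by (simp only: Br_def force_def)
      show ?thesis unfolding e1 e2 using np by (simp split: if_split)
    qed
    have "Bl \<noteq> Br" using bl0 br0 lr_ne by metis
    then have "\<exists>X\<in>S. score (cbt_nodes K) (cE K) \<sigma> X Bl \<noteq> score (cbt_nodes K) (cE K) \<sigma> X Br"
      using res bl br unfolding resolving_def by blast
    then obtain X where X: "X \<in> S" "score (cbt_nodes K) (cE K) \<sigma> X Bl \<noteq> score (cbt_nodes K) (cE K) \<sigma> X Br"
      by blast
    show ?thesis
    proof (rule ccontr)
      assume "\<not> ?thesis"
      then have "X [] \<noteq> l" "X [] \<noteq> r" using X(1) by auto
      have eqv: "(X x = Bl x) = (X x = Br x)" for x
      proof (cases "x = []")
        case True
        then show ?thesis using bl0 br0 \<open>X [] \<noteq> l\<close> \<open>X [] \<noteq> r\<close> by simp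
      next
        case False
        then show ?thesis using agree[OF False] by simp
      qed
      have "{x \<in> matches (cbt_nodes K) (cE K). X x = Bl x} = {x \<in> matches (cbt_nodes K) (cE K). X x = Br x}"
        using eqv by blast
      then have "score (cbt_nodes K) (cE K) \<sigma> X Bl = score (cbt_nodes K) (cE K) \<sigma> X Br"
        unfolding score_def by (simp only:)
      then show False using X(2) by simp
    qed
  qed
  have "LL K \<subseteq> ch \<or> RR K \<subseteq> ch"
  proof (rule ccontr)
    assume "\<not> ?thesis"
    then obtain l r where lr: "l \<in> LL K" "l \<notin> ch" "r \<in> RR K" "r \<notin> ch" by blast
    from key[OF lr(1) lr(3)] obtain X where "X \<in> S" "X [] = l \<or> X [] = r" by blast
    then have "l \<in> ch \<or> r \<in> ch" unfolding ch_def by force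
    then show False using lr by blast
  qed
  moreover have cR: "card (RR K) = 2 ^ (K - 1)"
    unfolding RR_def by (subst card_image) (auto simp: inj_on_def card_len_eq)
  moreover have c1: "card ch \<le> card S" unfolding ch_def using fin by (rule card_image_le)
  moreover have f: "finite ch" unfolding ch_def using fin by simp
  ultimately show ?thesis
  proof (elim disjE)
    assume "LL K \<subseteq> ch"
    then have "card (LL K) \<le> card ch" using f by (rule card_mono[rotated])
    then show ?thesis using c1 card_LL[of K] by linarith
  next
    assume "RR K \<subseteq> ch"
    then have "card (RR K) \<le> card ch" using f by (rule card_mono[rotated])
    then show ?thesis using c1 cR by linarith
  qed
qed


definition lead :: "bool list \<Rightarrow> nat" where "lead v = length (takeWhile (\<lambda>b. b) v)"
abbreviation sp :: "nat \<Rightarrow> bool list" where "sp i \<equiv> replicate i True"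

definition cw :: "nat \<Rightarrow> bool list \<Rightarrow> nat \<Rightarrow> bool list" where
  "cw K c i = sp i @ False # take (K - 1 - i) (tl c)"

definition Xc :: "nat \<Rightarrow> bool list \<Rightarrow> bool list \<Rightarrow> bool list" where
  "Xc K c v = (if K < length v then undefined else if length v = K then v
     else if prefix v (cw K c (lead v)) then cw K c (lead v) else G0 K v)"

lemma takeWhile_sp: "takeWhile (\<lambda>b. b) v = sp (lead v)"
  unfolding lead_def by (induction v) auto

lemma prefix_sp_lead: "prefix (sp (lead v)) v"
  by (metis takeWhile_sp takeWhile_dropWhile_id prefixI)

lemma lead_le: "lead v \<le> length v"
  unfolding lead_def by (rule length_takeWhile_le)

lemma lead_nth: "lead v < length v \<Longrightarrow> v ! lead v = False"
  unfolding lead_def using nth_length_takeWhile by fastforce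

lemma lead_all: "(\<forall>b\<in>set x. b) \<Longrightarrow> lead (x @ y) = length x + lead y"
  unfolding lead_def by (induction x) auto

lemma lead_notall: "\<not>(\<forall>b\<in>set x. b) \<Longrightarrow> lead (x @ y) = lead x"
  unfolding lead_def by (metis takeWhile_append1)

lemma lead_sp: "lead (sp j) = j"
  using lead_all[of "sp j" "[]"] by (simp add: lead_def)

lemma lead_sp_False: "lead (sp j @ False # w) = j"
  using lead_all[of "sp j" "False # w"] by (simp add: lead_def)

lemma all_True_sp: "(\<forall>b\<in>set x. b) \<Longrightarrow> x = sp (length x)"
  by (induction x) auto

lemma prefix_sp_lead_ge: "prefix (sp j) x \<Longrightarrow> j \<le> lead x"
proof -
  assume "prefix (sp j) x"
  then obtain r where "x = sp j @ r" by (auto simp: prefix_def)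
  then show ?thesis using lead_all[of "sp j" r] by simp
qed

lemma len_cw: "length c = K \<Longrightarrow> i < K \<Longrightarrow> length (cw K c i) = K"
  unfolding cw_def by simp

lemma brk_Xc: assumes c: "length c = K" shows "brk K (Xc K c)"
  unfolding brackets_cE
proof (intro conjI allI impI)
  fix v :: "bool list" assume "K < length v" then show "Xc K c v = undefined" by (simp add: Xc_def)
next
  fix v :: "bool list" assume v: "length v \<le> K"
  have "lead v < K" if "length v < K" using lead_le[of v] that by linarith
  then show "length (Xc K c v) = K" using v len_cw[OF c] G0_def by (auto simp: Xc_def G0_def)
next
  fix v :: "bool list" assume "length v = K" then show "Xc K c v = v" by (simp add: Xc_def)
next
  fix x :: "bool list" assume lt: "length x < K"
  define i where "i = lead x"
  define w0 where "w0 = cw K c i"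
  have iK: "i < K" using lead_le[of x] lt unfolding i_def by linarith
  have lw0: "length w0 = K" unfolding w0_def using len_cw[OF c iK] .
  show "Xc K c x = Xc K c (x @ [False]) \<or> Xc K c x = Xc K c (x @ [True])"
  proof (cases "prefix x w0")
    case True
    then have X: "Xc K c x = w0" using lt unfolding Xc_def w0_def i_def by simp
    define b where "b = w0 ! length x"
    have pb: "prefix (x @ [b]) w0" unfolding b_def using append_one_prefix[OF True] lt lw0 by simp
    have li: "lead (x @ [b]) = i"
    proof (cases "\<forall>b\<in>set x. b")
      case True
      then have xs: "x = sp (length x)" by (rule all_True_sp)
      then have "i = length x" unfolding i_def using lead_sp by metis
      then have "b = False" unfolding b_def w0_def cw_def by (simp add: nth_append)
      then show ?thesis using lead_all[OF True, of "[b]"] \<open>i = length x\<close> by (simp add: lead_def)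
    next
      case False
      then show ?thesis using lead_notall i_def by simp
    qed
    have "Xc K c (x @ [b]) = w0"
    proof (cases "length (x @ [b]) = K")
      case True
      then have "x @ [b] = w0" using pb lw0 prefix_eq_len[of "x@[b]" w0] by simp
      then show ?thesis using True by (simp add: Xc_def)
    next
      case False
      then show ?thesis using pb li lt unfolding Xc_def w0_def by simp
    qed
    then show ?thesis using X by (cases b) auto
  next
    case False
    then have X: "Xc K c x = G0 K x" using lt unfolding Xc_def w0_def i_def by simp
    have na: "\<not>(\<forall>b\<in>set x. b)"
    proof
      assume "\<forall>b\<in>set x. b"
      then have xs: "x = sp (length x)" by (rule all_True_sp)
      then have "i = length x" unfolding i_def using lead_sp by metis
      then have "prefix x w0" unfolding w0_def cw_def using xs by (metis prefixI append.assoc)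
      then show False using False by simp
    qed
    have li: "lead (x @ [False]) = i" using lead_notall[OF na] i_def by simp
    have np: "\<not> prefix (x @ [False]) w0" using False by (metis prefix_order.dual_order.trans prefixI)
    have "Xc K c (x @ [False]) = G0 K (x @ [False])"
    proof (cases "length (x @ [False]) = K")
      case True
      then show ?thesis by (simp add: Xc_def G0_def)
    next
      case False
      then show ?thesis using np li lt unfolding Xc_def w0_def by simp
    qed
    then show ?thesis using X G0_step[OF lt] by simp
  qed
qed

lemma Xc_sp: "j < K \<Longrightarrow> Xc K c (sp j) = cw K c j"
  unfolding Xc_def by (simp add: lead_sp cw_def prefix_def)

lemma Xc_root: "1 \<le> K \<Longrightarrow> length c = K \<Longrightarrow> hd c = False \<Longrightarrow> Xc K c [] = c"
proof -
  assume "1 \<le> K" "length c = K" "hd c = False"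
  then have "c = False # tl c" by (cases c) auto
  moreover have "take (K - 1) (tl c) = tl c" using \<open>length c = K\<close> by simp
  ultimately show ?thesis using \<open>1 \<le> K\<close> Xc_sp[of 0 K c] unfolding cw_def by simp
qed

definition cb :: "nat \<Rightarrow> bool list \<Rightarrow> nat \<Rightarrow> bool \<Rightarrow> bool list" where
  "cb K m j b = False # (drop (j+1) m @ [b]) @ replicate j False"

lemma cb_LL: "j + 1 < K \<Longrightarrow> length m = K - 1 \<Longrightarrow> cb K m j b \<in> LL K"
  unfolding cb_def LL_def by (rule imageI) simp

lemma m_decomp: "prefix (sp j @ [False]) m \<Longrightarrow> m = sp j @ False # drop (j+1) m"
  by (auto simp: prefix_def)

lemma cw_cb_j: assumes "prefix (sp j @ [False]) m" "length m = K - 1" "j + 1 < K"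
  shows "cw K (cb K m j b) j = m @ [b]"
proof -
  have l: "length (drop (j+1) m) = K - 1 - j - 1" using assms(2) by simp
  have "take (K - 1 - j) (drop (j+1) m @ [b] @ replicate j False) = drop (j+1) m @ [b]"
    using l assms(3) by simp
  then show ?thesis unfolding cw_def cb_def using m_decomp[OF assms(1)] by simp
qed

lemma cw_cb_i: assumes "length m = K - 1" "j < i"
  shows "cw K (cb K m j b) i = cw K (cb K m j b') i"
proof -
  have l: "length (drop (j+1) m) = K - 1 - j - 1" using assms(1) by simp
  have "K - 1 - i \<le> length (drop (j+1) m)" using l assms(2) by simp
  then show ?thesis unfolding cw_def cb_def by simp
qed

lemma Xc_less: "length x < K \<Longrightarrow> Xc K c x = (if prefix x (cw K c (lead x)) then cw K c (lead x) else G0 K x)"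
  unfolding Xc_def by simp

lemma Xc_cb_chain: assumes "prefix (sp j @ [False]) m" "length m = K - 1" "j + 1 < K"
  "prefix (sp j) x" "prefix x m"
  shows "Xc K (cb K m j b) x = m @ [b]"
proof -
  have lx: "length x < K" using prefix_length_le[OF assms(5)] assms(2,3) by simp
  obtain r where x: "x = sp j @ r" using assms(4) by (auto simp: prefix_def)
  have md: "m = sp j @ False # drop (j+1) m" by (rule m_decomp[OF assms(1)])
  have "prefix r (False # drop (j+1) m)" using assms(5) x md by (metis same_prefix_prefix)
  then have "lead x = j"
  proof (cases r)
    case Nil then show ?thesis using x lead_sp by simp
  next
    case (Cons a r')
    then have "a = False" using \<open>prefix r (False # drop (j+1) m)\<close> by simp
    then show ?thesis using x Cons lead_sp_False by simp
  qed
  moreover have "prefix x (m @ [b])" using assms(5) by (metis prefix_order.dual_order.trans prefixI)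
  ultimately show ?thesis using Xc_less[OF lx] cw_cb_j[OF assms(1,2,3)] by simp
qed

lemma Xc_cb_off: assumes "prefix (sp j @ [False]) m" "length m = K - 1" "j + 1 < K"
  "prefix (sp j) x" "length x < K" "\<not> prefix x m"
  shows "Xc K (cb K m j True) x = Xc K (cb K m j False) x"
proof -
  have ge: "j \<le> lead x" by (rule prefix_sp_lead_ge[OF assms(4)])
  show ?thesis
  proof (cases "lead x = j")
    case True
    have "\<not> prefix x (m @ [b])" for b using assms(5,6) assms(2,3) by auto
    then show ?thesis using Xc_less[OF assms(5)] True cw_cb_j[OF assms(1,2,3)] by simp
  next
    case False
    then have "j < lead x" using ge by simp
    then show ?thesis using Xc_less[OF assms(5)] cw_cb_i[OF assms(2), of j "lead x" True False] by simp
  qed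
qed

lemma fin_Ch: "finite {x. prefix u x \<and> prefix (x::bool list) m}"
  by (rule finite_subset[OF _ finite_len_le[of "length m"]]) (auto dest: prefix_length_le)

lemma chain_mono: assumes "brk K Y" "length m < K" "prefix x m" "prefix x' m" "prefix x x'" "Y x = m @ [b]"
  shows "Y x' = m @ [b]"
proof -
  have "prefix x' (Y x)" using assms(4,6) by (metis prefix_order.dual_order.trans prefixI)
  then show ?thesis using brk_mono[OF assms(1,5)] assms(2,4,6) prefix_length_le[OF assms(4)] by simp
qed

lemma chain_m: assumes "brk K Y" "length m < K" "length m + 1 = K" shows "Y m = m @ [False] \<or> Y m = m @ [True]"
  using brk_match[OF assms(1,2)] brk_leaf[OF assms(1), of "m @ [False]"] brk_leaf[OF assms(1), of "m @ [True]"] assms(3)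
  by auto

lemma chain_core:
  fixes \<sigma> :: "bool list \<Rightarrow> real"
  assumes B: "brk K B" and C: "brk K C" and lm: "length m < K" and um: "prefix u m"
    and pos: "\<And>x. length x < K \<Longrightarrow> \<sigma> x > 0"
    and Bm: "B m = m @ [b]" and Cm: "C m = m @ [b]"
    and eq: "(\<Sum>x\<in>{x. prefix u x \<and> prefix x m}. \<sigma> x * of_bool (B x = m @ [b])) =
             (\<Sum>x\<in>{x. prefix u x \<and> prefix x m}. \<sigma> x * of_bool (C x = m @ [b]))"
  shows "\<forall>x\<in>{x. prefix u x \<and> prefix x m}. (B x = m @ [b] \<longleftrightarrow> C x = m @ [b])"
proof -
  define Ch where "Ch = {x. prefix u x \<and> prefix x m}"
  define PB where "PB = {x\<in>Ch. B x = m @ [b]}"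
  define PC where "PC = {x\<in>Ch. C x = m @ [b]}"
  have fCh: "finite Ch" unfolding Ch_def by (rule fin_Ch)
  have fPB: "finite PB" and fPC: "finite PC" using fCh unfolding PB_def PC_def by auto
  have posCh: "\<sigma> x > 0" if "x \<in> Ch" for x
    using that pos lm prefix_length_le[of x m] unfolding Ch_def by force
  have sB: "(\<Sum>x\<in>Ch. \<sigma> x * of_bool (B x = m @ [b])) = sum \<sigma> PB"
    unfolding PB_def using fCh by (simp add: sum.inter_filter of_bool_def if_distrib cong: if_cong)
  have sC: "(\<Sum>x\<in>Ch. \<sigma> x * of_bool (C x = m @ [b])) = sum \<sigma> PC"
    unfolding PC_def using fCh by (simp add: sum.inter_filter of_bool_def if_distrib cong: if_cong)
  have e: "sum \<sigma> PB = sum \<sigma> PC" using eq sB sC unfolding Ch_def by simp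
  have nested: "PB \<subseteq> PC \<or> PC \<subseteq> PB"
  proof (rule ccontr)
    assume "\<not> ?thesis"
    then obtain x x' where x: "x \<in> PB" "x \<notin> PC" and x': "x' \<in> PC" "x' \<notin> PB" by blast
    have xm: "prefix x m" "prefix x' m" and xc: "x \<in> Ch" "x' \<in> Ch" using x x' unfolding PB_def PC_def Ch_def by auto
    show False
    proof (cases "prefix x x'")
      case True
      have "B x' = m @ [b]" using chain_mono[OF B lm xm True] x unfolding PB_def by simp
      then show False using x' xc unfolding PB_def by simp
    next
      case False
      then have "prefix x' x" using prefix_same_cases[OF xm] by blast
      have "C x = m @ [b]" using chain_mono[OF C lm xm(2) xm(1) \<open>prefix x' x\<close>] x' unfolding PC_def by simp
      then show False using x xc unfolding PC_def by simp
    qed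
  qed
  have "PB = PC"
  proof (cases "PB \<subseteq> PC")
    case True
    have "sum \<sigma> PC = sum \<sigma> PB + sum \<sigma> (PC - PB)" using fPC True by (metis sum.subset_diff add.commute)
    then have z: "sum \<sigma> (PC - PB) = 0" using e by simp
    have "PC - PB = {}"
    proof (rule ccontr)
      assume "PC - PB \<noteq> {}"
      then have "sum \<sigma> (PC - PB) > 0" using fPC posCh unfolding PC_def by (intro sum_pos) auto
      then show False using z by simp
    qed
    then show ?thesis using True by blast
  next
    case False
    then have sub: "PC \<subseteq> PB" using nested by blast
    have "sum \<sigma> PB = sum \<sigma> PC + sum \<sigma> (PB - PC)" using fPB sub by (metis sum.subset_diff add.commute)
    then have z: "sum \<sigma> (PB - PC) = 0" using e by simp
    have "PB - PC = {}"
    proof (rule ccontr)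
      assume "PB - PC \<noteq> {}"
      then have "sum \<sigma> (PB - PC) > 0" using fPB posCh unfolding PB_def by (intro sum_pos) auto
      then show False using z by simp
    qed
    then show ?thesis using sub by blast
  qed
  then show ?thesis unfolding PB_def PC_def Ch_def by blast
qed

lemma phi_val:
  fixes \<sigma> :: "bool list \<Rightarrow> real"
  assumes Y: "brk K Y" and lm: "length m < K" and um: "prefix u m"
    and pos: "\<And>x. length x < K \<Longrightarrow> \<sigma> x > 0" and Ym: "Y m = m @ [b]"
  shows "(\<Sum>x\<in>{x. prefix u x \<and> prefix x m}. \<sigma> x * (of_bool (Y x = m @ [False]) - of_bool (Y x = m @ [True])))
       = (if b then -1 else 1) * (\<Sum>x\<in>{x. prefix u x \<and> prefix x m}. \<sigma> x * of_bool (Y x = m @ [b]))"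
    and "(\<Sum>x\<in>{x. prefix u x \<and> prefix x m}. \<sigma> x * of_bool (Y x = m @ [b])) > 0"
proof -
  define Ch where "Ch = {x. prefix u x \<and> prefix x m}"
  have fCh: "finite Ch" unfolding Ch_def by (rule fin_Ch)
  have no: "Y x \<noteq> m @ [\<not> b]" if "x \<in> Ch" for x
  proof
    assume "Y x = m @ [\<not> b]"
    then have "Y m = m @ [\<not> b]" using chain_mono[OF Y lm, of x m] that unfolding Ch_def by simp
    then show False using Ym by simp
  qed
  have "(\<Sum>x\<in>Ch. \<sigma> x * (of_bool (Y x = m @ [False]) - of_bool (Y x = m @ [True])))
       = (\<Sum>x\<in>Ch. (if b then -1 else 1) * (\<sigma> x * of_bool (Y x = m @ [b])))"
  proof (rule sum.cong[OF refl])
    fix x assume "x \<in> Ch"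
    then show "\<sigma> x * (of_bool (Y x = m @ [False]) - of_bool (Y x = m @ [True])) =
               (if b then -1 else 1) * (\<sigma> x * of_bool (Y x = m @ [b]))"
      using no[of x] by (cases b) auto
  qed
  then show "(\<Sum>x\<in>{x. prefix u x \<and> prefix x m}. \<sigma> x * (of_bool (Y x = m @ [False]) - of_bool (Y x = m @ [True])))
       = (if b then -1 else 1) * (\<Sum>x\<in>{x. prefix u x \<and> prefix x m}. \<sigma> x * of_bool (Y x = m @ [b]))"
    unfolding Ch_def by (simp add: sum_distrib_left)
  have mCh: "m \<in> Ch" unfolding Ch_def using um by simp
  show "(\<Sum>x\<in>{x. prefix u x \<and> prefix x m}. \<sigma> x * of_bool (Y x = m @ [b])) > 0"
    unfolding Ch_def[symmetric]
  proof (rule sum_pos2[OF fCh mCh])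
    show "0 < \<sigma> m * of_bool (Y m = m @ [b])" using Ym pos[OF lm] by simp
    fix x assume "x \<in> Ch"
    then have "length x < K" using lm prefix_length_le[of x m] unfolding Ch_def by simp
    then have "\<sigma> x > 0" by (rule pos)
    then show "0 \<le> \<sigma> x * of_bool (Y x = m @ [b])" by simp
  qed
qed

lemma chain_eq:
  fixes \<sigma> :: "bool list \<Rightarrow> real"
  assumes B: "brk K B" and C: "brk K C" and lm: "length m + 1 = K" and um: "prefix u m"
    and pos: "\<And>x. length x < K \<Longrightarrow> \<sigma> x > 0"
    and eq: "(\<Sum>x\<in>{x. prefix u x \<and> prefix x m}. \<sigma> x * (of_bool (B x = m @ [False]) - of_bool (B x = m @ [True])))
           = (\<Sum>x\<in>{x. prefix u x \<and> prefix x m}. \<sigma> x * (of_bool (C x = m @ [False]) - of_bool (C x = m @ [True])))"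
  shows "\<forall>x\<in>{x. prefix u x \<and> prefix x m}. \<forall>b. (B x = m @ [b] \<longleftrightarrow> C x = m @ [b])"
proof -
  have lm': "length m < K" using lm by simp
  obtain bB where bB: "B m = m @ [bB]" using chain_m[OF B lm' lm] by blast
  obtain bC where bC: "C m = m @ [bC]" using chain_m[OF C lm' lm] by blast
  note vB = phi_val[where \<sigma>=\<sigma>, OF B lm' um pos bB]
  note vC = phi_val[where \<sigma>=\<sigma>, OF C lm' um pos bC]
  have "bB = bC"
  proof (rule ccontr)
    assume "bB \<noteq> bC"
    then show False using eq vB vC by (cases bB; cases bC) auto
  qed
  then have e: "(\<Sum>x\<in>{x. prefix u x \<and> prefix x m}. \<sigma> x * of_bool (B x = m @ [bB])) =
                (\<Sum>x\<in>{x. prefix u x \<and> prefix x m}. \<sigma> x * of_bool (C x = m @ [bB]))"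
    using eq vB(1) vC(1) by (cases bB) auto
  have core: "\<forall>x\<in>{x. prefix u x \<and> prefix x m}. (B x = m @ [bB] \<longleftrightarrow> C x = m @ [bB])"
    using chain_core[where \<sigma>=\<sigma>, OF B C lm' um pos bB _ e] bC \<open>bB = bC\<close> by simp
  have nB: "B x \<noteq> m @ [\<not> bB]" and nC: "C x \<noteq> m @ [\<not> bB]" if "x \<in> {x. prefix u x \<and> prefix x m}" for x
  proof -
    show "B x \<noteq> m @ [\<not> bB]"
    proof
      assume "B x = m @ [\<not> bB]"
      then have "B m = m @ [\<not> bB]" using chain_mono[OF B lm', of x m] that by simp
      then show False using bB by simp
    qed
    show "C x \<noteq> m @ [\<not> bB]"
    proof
      assume "C x = m @ [\<not> bB]"
      then have "C m = m @ [\<not> bB]" using chain_mono[OF C lm', of x m] that by simp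
      then show False using bC \<open>bB = bC\<close> by simp
    qed
  qed
  show ?thesis
  proof (intro ballI allI)
    fix x b assume x: "x \<in> {x. prefix u x \<and> prefix x m}"
    show "(B x = m @ [b]) = (C x = m @ [b])"
    proof (cases "b = bB")
      case True then show ?thesis using core x by simp
    next
      case False then have "b = (\<not> bB)" by simp
      then show ?thesis using nB[OF x] nC[OF x] by simp
    qed
  qed
qed


context
  fixes K :: nat and \<sigma> :: "bool list \<Rightarrow> real" and B C :: "bool list \<Rightarrow> bool list"
  assumes K1: "1 \<le> K" and pos: "\<And>x. length x < K \<Longrightarrow> \<sigma> x > 0"
    and B: "brk K B" and C: "brk K C"
begin

definition Dl :: "bool list \<Rightarrow> (bool list \<Rightarrow> bool list) \<Rightarrow> real" where
  "Dl u X = (\<Sum>x\<in>{x. length x < K \<and> prefix u x}. \<sigma> x * (of_bool (X x = B x) - of_bool (X x = C x)))"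

lemma fin_M: "finite {x::bool list. length x < K \<and> prefix u x}"
  by (rule finite_subset[OF _ finite_len_less[of K]]) auto

lemma score_diff: "score (cbt_nodes K) (cE K) \<sigma> X B - score (cbt_nodes K) (cE K) \<sigma> X C = Dl [] X"
proof -
  have f: "finite {x::bool list. length x < K}" by (rule finite_len_less)
  have "score (cbt_nodes K) (cE K) \<sigma> X Y = (\<Sum>x\<in>{x. length x < K}. \<sigma> x * of_bool (X x = Y x))" for Y
  proof -
    have "score (cbt_nodes K) (cE K) \<sigma> X Y = (\<Sum>x\<in>{x. length x < K}. if X x = Y x then \<sigma> x else 0)"
      unfolding score_def matches_cE by (rule sum.inter_filter[OF f])
    also have "\<dots> = (\<Sum>x\<in>{x. length x < K}. \<sigma> x * of_bool (X x = Y x))"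
      by (rule sum.cong) auto
    finally show ?thesis .
  qed
  then show ?thesis unfolding Dl_def by (simp add: sum_subtractf right_diff_distrib)
qed

lemma decomp: assumes "j < K"
  shows "Dl (sp j) X = \<sigma> (sp j) * (of_bool (X (sp j) = B (sp j)) - of_bool (X (sp j) = C (sp j)))
     + (\<Sum>x\<in>{x. length x < K \<and> prefix (sp j @ [False]) x}. \<sigma> x * (of_bool (X x = B x) - of_bool (X x = C x)))
     + Dl (sp (Suc j)) X"
proof -
  define Lf where "Lf = {x::bool list. length x < K \<and> prefix (sp j @ [False]) x}"
  define Rt where "Rt = {x::bool list. length x < K \<and> prefix (sp (Suc j)) x}"
  have spS: "sp (Suc j) = sp j @ [True]" by (simp add: replicate_append_same)
  have split: "{x. length x < K \<and> prefix (sp j) x} = insert (sp j) (Lf \<union> Rt)"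
  proof (intro set_eqI iffI)
    fix x assume "x \<in> {x. length x < K \<and> prefix (sp j) x}"
    then obtain r where x: "x = sp j @ r" "length x < K" by (auto simp: prefix_def)
    show "x \<in> insert (sp j) (Lf \<union> Rt)"
    proof (cases r)
      case Nil then show ?thesis using x by simp
    next
      case (Cons a r')
      then show ?thesis using x spS unfolding Lf_def Rt_def by (cases a) (auto simp: prefix_def)
    qed
  next
    fix x assume "x \<in> insert (sp j) (Lf \<union> Rt)"
    then show "x \<in> {x. length x < K \<and> prefix (sp j) x}"
      using assms spS unfolding Lf_def Rt_def
      by (auto dest: append_prefixD)
  qed
  have d1: "Lf \<inter> Rt = {}" unfolding Lf_def Rt_def spS
    by (auto simp: prefix_def)
  have d2: "sp j \<notin> Lf \<union> Rt" unfolding Lf_def Rt_def spS by (auto dest: prefix_length_le)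
  have fL: "finite Lf" unfolding Lf_def by (rule fin_M)
  have fR: "finite Rt" unfolding Rt_def by (rule fin_M)
  show ?thesis unfolding Dl_def split Lf_def[symmetric] Rt_def[symmetric]
    using d1 d2 fL fR by (simp add: sum.union_disjoint)
qed

definition gg :: "(bool list \<Rightarrow> bool list) \<Rightarrow> bool list \<Rightarrow> real" where
  "gg X x = \<sigma> x * (of_bool (X x = B x) - of_bool (X x = C x))"

lemma Dl_gg: "Dl u X = sum (gg X) {x. length x < K \<and> prefix u x}"
  unfolding Dl_def gg_def by simp

lemma chainres:
  assumes jK: "j + 1 < K" and H: "\<forall>c\<in>LL K. Dl (sp j) (Xc K c) = 0"
    and m: "prefix (sp j @ [False]) m" and lm: "length m + 1 = K"
  shows "\<forall>x\<in>{x. prefix (sp j) x \<and> prefix x m}. \<forall>b. (B x = m @ [b] \<longleftrightarrow> C x = m @ [b])"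
proof -
  have lm1: "length m = K - 1" using lm by simp
  define XF where "XF = Xc K (cb K m j False)"
  define XT where "XT = Xc K (cb K m j True)"
  have zF: "Dl (sp j) XF = 0" using H cb_LL[OF jK lm1] unfolding XF_def by blast
  have zT: "Dl (sp j) XT = 0" using H cb_LL[OF jK lm1] unfolding XT_def by blast
  define M where "M = {x::bool list. length x < K \<and> prefix (sp j) x}"
  define Ch where "Ch = {x. prefix (sp j) x \<and> prefix x m}"
  have fM: "finite M" unfolding M_def by (rule fin_M)
  have jm: "prefix (sp j) m" using m by (rule append_prefixD)
  have ChM: "Ch \<subseteq> M" unfolding Ch_def M_def using lm by (auto dest: prefix_length_le)
  have "Dl (sp j) XF - Dl (sp j) XT = sum (\<lambda>x. gg XF x - gg XT x) M"
    unfolding Dl_gg M_def by (simp add: sum_subtractf)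
  also have "\<dots> = sum (\<lambda>x. gg XF x - gg XT x) Ch"
  proof (rule sum.mono_neutral_right[OF fM ChM])
    show "\<forall>x\<in>M - Ch. gg XF x - gg XT x = 0"
    proof
      fix x assume "x \<in> M - Ch"
      then have "prefix (sp j) x" "length x < K" "\<not> prefix x m" unfolding M_def Ch_def by auto
      then have "XT x = XF x" unfolding XT_def XF_def using Xc_cb_off[OF m lm1 jK] by blast
      then show "gg XF x - gg XT x = 0" unfolding gg_def by simp
    qed
  qed
  also have "\<dots> = sum (\<lambda>x. \<sigma> x * (of_bool (B x = m @ [False]) - of_bool (B x = m @ [True]))
                  - \<sigma> x * (of_bool (C x = m @ [False]) - of_bool (C x = m @ [True]))) Ch"
  proof (rule sum.cong[OF refl])
    fix x assume "x \<in> Ch"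
    then have "prefix (sp j) x" "prefix x m" unfolding Ch_def by auto
    then have "XF x = m @ [False]" "XT x = m @ [True]" unfolding XF_def XT_def
      using Xc_cb_chain[OF m lm1 jK] by blast+
    then show "gg XF x - gg XT x = \<sigma> x * (of_bool (B x = m @ [False]) - of_bool (B x = m @ [True]))
                  - \<sigma> x * (of_bool (C x = m @ [False]) - of_bool (C x = m @ [True]))"
      unfolding gg_def by (simp add: eq_commute[of "m @ [False]"] eq_commute[of "m @ [True]"] algebra_simps)
  qed
  also have "\<dots> = (\<Sum>x\<in>Ch. \<sigma> x * (of_bool (B x = m @ [False]) - of_bool (B x = m @ [True])))
                 - (\<Sum>x\<in>Ch. \<sigma> x * (of_bool (C x = m @ [False]) - of_bool (C x = m @ [True])))"
    by (rule sum_subtractf)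
  finally have eq: "(\<Sum>x\<in>Ch. \<sigma> x * (of_bool (B x = m @ [False]) - of_bool (B x = m @ [True])))
                 = (\<Sum>x\<in>Ch. \<sigma> x * (of_bool (C x = m @ [False]) - of_bool (C x = m @ [True])))"
    using zF zT by simp
  show ?thesis using chain_eq[where \<sigma>=\<sigma>, OF B C lm jm pos] eq unfolding Ch_def by blast
qed

lemma good:
  assumes jK: "j < K" and H: "\<forall>c\<in>LL K. Dl (sp j) (Xc K c) = 0"
  shows "\<forall>v. prefix (sp j) v \<and> length v < K \<and> (prefix (sp j @ [False]) (B v) \<or> prefix (sp j @ [False]) (C v)) \<longrightarrow> B v = C v"
proof (cases "j + 1 < K")
  case True
  show ?thesis
  proof (intro allI impI)
    fix v assume v: "prefix (sp j) v \<and> length v < K \<and> (prefix (sp j @ [False]) (B v) \<or> prefix (sp j @ [False]) (C v))"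
    obtain p where p: "p = B v \<or> p = C v" "prefix (sp j @ [False]) p" using v by blast
    have lp: "length p = K" using p(1) brk_len[OF B] brk_len[OF C] v by auto
    have vp: "prefix v p" using p(1) brk_prefix[OF B] brk_prefix[OF C] v by auto
    define m where "m = butlast p"
    have pne: "p \<noteq> []" using lp K1 by auto
    have pm: "p = m @ [last p]" unfolding m_def using pne by simp
    have lm: "length m + 1 = K" unfolding m_def using lp pne K1 by simp
    have mp: "prefix m p" using pm by (metis prefixI)
    have vm: "prefix v m" using prefix_length_prefix[OF vp mp] v lm by simp
    have jm: "prefix (sp j @ [False]) m" using prefix_length_prefix[OF p(2) mp] True lm by simp
    have "v \<in> {x. prefix (sp j) x \<and> prefix x m}" using v vm by simp
    then have "B v = m @ [last p] \<longleftrightarrow> C v = m @ [last p]" using chainres[OF True H jm lm] by blast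
    then show "B v = C v" using p(1) pm by metis
  qed
next
  case False
  then have jK1: "j + 1 = K" using jK by simp
  define c0 where "c0 = False # replicate (K - 1) False"
  have c0: "c0 \<in> LL K" unfolding c0_def LL_def by simp
  have Msing: "{x::bool list. length x < K \<and> prefix (sp j) x} = {sp j}"
  proof (intro set_eqI iffI)
    fix x assume "x \<in> {x::bool list. length x < K \<and> prefix (sp j) x}"
    then have "prefix (sp j) x" "length x \<le> length (sp j)" using jK1 by auto
    then show "x \<in> {sp j}" using prefix_eq_len[of "sp j" x] prefix_length_le[of "sp j" x] by simp
  qed (use jK in auto)
  have "Xc K c0 (sp j) = sp j @ [False]" using Xc_sp[OF jK] jK1 unfolding cw_def by simp
  moreover have "Dl (sp j) (Xc K c0) = 0" using H c0 by blast
  ultimately have "\<sigma> (sp j) * (of_bool (sp j @ [False] = B (sp j)) - of_bool (sp j @ [False] = C (sp j))) = 0"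
    unfolding Dl_def Msing by simp
  moreover have "\<sigma> (sp j) > 0" using pos jK by simp
  ultimately have iff: "B (sp j) = sp j @ [False] \<longleftrightarrow> C (sp j) = sp j @ [False]"
    by (cases "B (sp j) = sp j @ [False]"; cases "C (sp j) = sp j @ [False]") auto
  show ?thesis
  proof (intro allI impI)
    fix v assume v: "prefix (sp j) v \<and> length v < K \<and> (prefix (sp j @ [False]) (B v) \<or> prefix (sp j @ [False]) (C v))"
    then have vs: "v = sp j" using jK1 by (metis (no_types, lifting) Msing mem_Collect_eq singletonD)
    have lB: "length (B v) = K" and lC: "length (C v) = K" using brk_len[OF B] brk_len[OF C] v by auto
    have "B v = sp j @ [False] \<or> C v = sp j @ [False]"
      using v lB lC jK1 prefix_eq_len[of "sp j @ [False]" "B v"] prefix_eq_len[of "sp j @ [False]" "C v"] by auto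
    then show "B v = C v" using iff vs by auto
  qed
qed

lemma Hstep:
  assumes jK: "j < K" and H: "\<forall>c\<in>LL K. Dl (sp j) (Xc K c) = 0"
  shows "\<forall>c\<in>LL K. Dl (sp (Suc j)) (Xc K c) = 0"
proof
  fix c assume c: "c \<in> LL K"
  note G = good[OF jK H]
  define X where "X = Xc K c"
  have left: "(\<Sum>x\<in>{x. length x < K \<and> prefix (sp j @ [False]) x}. \<sigma> x * (of_bool (X x = B x) - of_bool (X x = C x))) = 0"
  proof (rule sum.neutral, rule ballI)
    fix x assume "x \<in> {x. length x < K \<and> prefix (sp j @ [False]) x}"
    then have x: "length x < K" "prefix (sp j @ [False]) x" by auto
    have "prefix (sp j @ [False]) (B x)" using x brk_prefix[OF B, of x]
      by (meson less_imp_le prefix_order.dual_order.trans)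
    then have "B x = C x" using G x append_prefixD by blast
    then show "\<sigma> x * (of_bool (X x = B x) - of_bool (X x = C x)) = 0" by simp
  qed
  have root: "\<sigma> (sp j) * (of_bool (X (sp j) = B (sp j)) - of_bool (X (sp j) = C (sp j))) = 0"
  proof -
    have Xs: "X (sp j) = cw K c j" unfolding X_def using Xc_sp[OF jK] .
    have pf: "prefix (sp j @ [False]) (cw K c j)" unfolding cw_def by (simp add: prefix_def)
    have "B (sp j) = C (sp j)" if "cw K c j = B (sp j) \<or> cw K c j = C (sp j)"
      using G pf that jK by (metis prefix_order.order_refl length_replicate)
    then show ?thesis using Xs by (cases "cw K c j = B (sp j)"; cases "cw K c j = C (sp j)") auto
  qed
  have "Dl (sp j) X = 0" using H c unfolding X_def by blast
  then show "Dl (sp (Suc j)) (Xc K c) = 0" using decomp[OF jK, of X] left root unfolding X_def by simp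
qed

lemma allH:
  assumes H0: "\<forall>c\<in>LL K. Dl [] (Xc K c) = 0"
  shows "j < K \<Longrightarrow> \<forall>c\<in>LL K. Dl (sp j) (Xc K c) = 0"
proof (induction j)
  case 0 then show ?case using H0 by simp
next
  case (Suc j) then show ?case using Hstep[of j] by simp
qed

lemma BC_eq:
  assumes H0: "\<forall>c\<in>LL K. Dl [] (Xc K c) = 0"
  shows "B = C"
proof -
  have G: "\<And>j. j < K \<Longrightarrow> \<forall>v. prefix (sp j) v \<and> length v < K \<and> (prefix (sp j @ [False]) (B v) \<or> prefix (sp j @ [False]) (C v)) \<longrightarrow> B v = C v"
    using good allH[OF H0] by blast
  have main: "\<forall>v. length v \<le> K \<longrightarrow> K - length v \<le> d \<longrightarrow> B v = C v" for d
  proof (induction d)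
    case 0
    then show ?case using brk_leaf[OF B] brk_leaf[OF C] by auto
  next
    case (Suc d)
    show ?case
    proof (intro allI impI)
      fix v :: "bool list" assume v: "length v \<le> K" "K - length v \<le> Suc d"
      show "B v = C v"
      proof (cases "length v = K")
        case True then show ?thesis using brk_leaf[OF B] brk_leaf[OF C] by simp
      next
        case False
        then have lv: "length v < K" using v by simp
        define j where "j = lead v"
        have jv: "prefix (sp j) v" unfolding j_def by (rule prefix_sp_lead)
        have jl: "j \<le> length v" unfolding j_def by (rule lead_le)
        have jK: "j < K" using jl lv by simp
        show ?thesis
        proof (cases "prefix (sp j @ [False]) (B v) \<or> prefix (sp j @ [False]) (C v)")
          case True
          then show ?thesis using G[OF jK] jv lv by blast
        next
          case nf: False
          have vs: "v = sp j"
          proof (rule ccontr)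
            assume "v \<noteq> sp j"
            then have "j < length v" using jl jv prefix_eq_len[of "sp j" v] by fastforce
            then have "v ! j = False" unfolding j_def using lead_nth by simp
            then have "prefix (sp j @ [False]) v"
              using append_one_prefix[OF jv] \<open>j < length v\<close> by simp
            then have "prefix (sp j @ [False]) (B v)" using brk_prefix[OF B v(1)]
              by (meson prefix_order.dual_order.trans)
            then show False using nf by simp
          qed
          have spS: "sp (Suc j) = sp j @ [True]" by (simp add: replicate_append_same)
          have up: "Y (sp (Suc j)) = Y v" if Y: "brk K Y" and nY: "\<not> prefix (sp j @ [False]) (Y v)" for Y
          proof -
            have lY: "length (Y v) = K" using brk_len[OF Y v(1)] .
            have pY: "prefix v (Y v)" using brk_prefix[OF Y v(1)] .
            have "prefix (sp j @ [Y v ! j]) (Y v)" using append_one_prefix[OF pY] vs lY jK by simp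
            then have "Y v ! j = True" using nY by (cases "Y v ! j") auto
            then have "prefix (sp (Suc j)) (Y v)" using append_one_prefix[OF pY] vs lY jK spS by simp
            moreover have "prefix v (sp (Suc j))" using vs spS by simp
            moreover have "length (sp (Suc j)) \<le> K" using jK by simp
            ultimately show ?thesis using brk_mono[OF Y] by blast
          qed
          have "B (sp (Suc j)) = C (sp (Suc j))"
            using Suc.IH jK v(2) vs by simp
          then show ?thesis using up[OF B] up[OF C] nf by simp
        qed
      qed
    qed
  qed
  show ?thesis
  proof
    fix v :: "bool list"
    show "B v = C v"
    proof (cases "length v \<le> K")
      case True then show ?thesis using main by blast
    next
      case False then show ?thesis using brk_undef[OF B] brk_undef[OF C] by simp
    qed
  qed
qed

end


lemma LL_props: "c \<in> LL K \<Longrightarrow> 1 \<le> K \<Longrightarrow> length c = K \<and> hd c = False"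
  unfolding LL_def by auto

lemma upper_cE:
  assumes K1: "1 \<le> K" and sc: "scoring_system (cbt_nodes K) (cE K) \<sigma>"
  shows "resolving (cbt_nodes K) (cE K) \<sigma> (Xc K ` LL K)"
  unfolding resolving_def
proof (intro conjI ballI impI)
  have pos: "\<And>x. length x < K \<Longrightarrow> \<sigma> x > 0" using sc unfolding scoring_system_def matches_cE by simp
  show "Xc K ` LL K \<subseteq> brackets (cbt_nodes K) (cE K)"
  proof (rule image_subsetI)
    fix c assume "c \<in> LL K"
    then have "length c = K" using LL_props[OF _ K1] by simp
    then show "brk K (Xc K c)" by (rule brk_Xc)
  qed
  fix B C assume B: "brk K B" and C: "brk K C" and ne: "B \<noteq> C"
  show "\<exists>Bi\<in>Xc K ` LL K. score (cbt_nodes K) (cE K) \<sigma> Bi B \<noteq> score (cbt_nodes K) (cE K) \<sigma> Bi C"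
  proof (rule ccontr)
    assume nt: "\<not> ?thesis"
    have nt2: "\<forall>Bi\<in>Xc K ` LL K. score (cbt_nodes K) (cE K) \<sigma> Bi B = score (cbt_nodes K) (cE K) \<sigma> Bi C"
      using nt by simp
    have "\<forall>c\<in>LL K. score (cbt_nodes K) (cE K) \<sigma> (Xc K c) B = score (cbt_nodes K) (cE K) \<sigma> (Xc K c) C"
    proof
      fix c assume "c \<in> LL K"
      then have "Xc K c \<in> Xc K ` LL K" by (rule imageI)
      then show "score (cbt_nodes K) (cE K) \<sigma> (Xc K c) B = score (cbt_nodes K) (cE K) \<sigma> (Xc K c) C"
        by (rule bspec[OF nt2])
    qed
    then have "\<forall>c\<in>LL K. Dl K \<sigma> B C [] (Xc K c) = 0"
      by (simp add: score_diff[where \<sigma>=\<sigma>, OF K1 pos B C, symmetric])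
    then have "B = C" by (metis BC_eq K1 pos B C)
    then show False using ne by simp
  qed
qed

lemma card_upper: "1 \<le> K \<Longrightarrow> card (Xc K ` LL K) = 2 ^ (K - 1)"
proof -
  assume K1: "1 \<le> K"
  have "inj_on (Xc K) (LL K)"
  proof (rule inj_onI)
    fix c c' assume a: "c \<in> LL K" "c' \<in> LL K" "Xc K c = Xc K c'"
    have l1: "length c = K" "hd c = False" using LL_props[OF a(1) K1] by auto
    have l2: "length c' = K" "hd c' = False" using LL_props[OF a(2) K1] by auto
    have "c = Xc K c []" using Xc_root[OF K1 l1(1) l1(2)] by (rule sym)
    also have "\<dots> = Xc K c' []" using a(3) by (rule fun_cong)
    also have "\<dots> = c'" using Xc_root[OF K1 l2(1) l2(2)] .
    finally show "c = c'" .
  qed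
  then show ?thesis using card_LL by (simp add: card_image)
qed

lemma finite_upper: "finite (Xc K ` LL K)"
proof -
  have "finite {w::bool list. length w = K - 1}" using finite_lists_length_eq[of "UNIV::bool set" "K - 1"] by simp
  then show ?thesis unfolding LL_def by simp
qed


definition trf :: "'b set \<Rightarrow> ('a \<Rightarrow> 'b) \<Rightarrow> ('b \<Rightarrow> 'a) \<Rightarrow> ('a \<Rightarrow> 'a) \<Rightarrow> 'b \<Rightarrow> 'b" where
  "trf V' f h B = (\<lambda>v'. if v' \<in> V' then f (B (h v')) else undefined)"

locale tiso =
  fixes V :: "'a set" and E :: "('a \<times> 'a) set" and V' :: "'b set" and E' :: "('b \<times> 'b) set"
    and f :: "'a \<Rightarrow> 'b" and h :: "'b \<Rightarrow> 'a"
  assumes A1: "\<And>v. v \<in> V \<Longrightarrow> f v \<in> V' \<and> h (f v) = v"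
    and A2: "\<And>v'. v' \<in> V' \<Longrightarrow> h v' \<in> V \<and> f (h v') = v'"
    and A3: "E \<subseteq> V \<times> V" and A4: "E' \<subseteq> V' \<times> V'"
    and A5: "\<And>u v. u \<in> V \<Longrightarrow> v \<in> V \<Longrightarrow> (u, v) \<in> E \<longleftrightarrow> (f u, f v) \<in> E'"
begin

lemma sym: "tiso V' E' V E h f"
proof
  fix u' v' assume u: "u' \<in> V'" and v: "v' \<in> V'"
  have "(h u', h v') \<in> E \<longleftrightarrow> (f (h u'), f (h v')) \<in> E'" using A5 A2 u v by blast
  then show "(u', v') \<in> E' \<longleftrightarrow> (h u', h v') \<in> E" using A2 u v by simp
qed (use A1 A2 A3 A4 in auto)

lemma inj: "inj_on f V"
  by (rule inj_on_inverseI[of V h]) (use A1 in simp)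

lemma nbrs: assumes v: "v \<in> V" shows "in_nbrs E' (f v) = f ` in_nbrs E v"
proof (intro set_eqI iffI)
  fix u' assume "u' \<in> in_nbrs E' (f v)"
  then have e: "(u', f v) \<in> E'" by (simp add: in_nbrs_def)
  then have u': "u' \<in> V'" using A4 by auto
  then have "(f (h u'), f v) \<in> E'" using A2 e by simp
  then have "(h u', v) \<in> E" using A5 A2 u' v by blast
  then have "h u' \<in> in_nbrs E v" by (simp add: in_nbrs_def)
  then show "u' \<in> f ` in_nbrs E v" using A2 u' by (metis image_eqI)
next
  fix u' assume "u' \<in> f ` in_nbrs E v"
  then obtain u where u: "u' = f u" "(u, v) \<in> E" by (auto simp: in_nbrs_def)
  then have "u \<in> V" using A3 by auto
  then have "(f u, f v) \<in> E'" using A5 v u by blast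
  then show "u' \<in> in_nbrs E' (f v)" using u by (simp add: in_nbrs_def)
qed

lemma players_iff: "v \<in> V \<Longrightarrow> f v \<in> players V' E' \<longleftrightarrow> v \<in> players V E"
  unfolding players_def using nbrs A1 by auto

lemma matches_iff: "v \<in> V \<Longrightarrow> f v \<in> matches V' E' \<longleftrightarrow> v \<in> matches V E"
  unfolding matches_def using players_iff A1 by auto

lemma players_img: "players V' E' = f ` players V E"
proof (intro set_eqI iffI)
  fix x assume x: "x \<in> players V' E'"
  then have xv: "x \<in> V'" by (simp add: players_def)
  then have "h x \<in> players V E" using players_iff[of "h x"] A2 x by simp
  then show "x \<in> f ` players V E" using A2 xv by (metis image_eqI)
next
  fix x assume "x \<in> f ` players V E"
  then obtain v where v: "x = f v" "v \<in> players V E" by blast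
  then show "x \<in> players V' E'" using players_iff[of v] by (simp add: players_def)
qed


lemma tr_br: assumes B: "B \<in> brackets V E" shows "trf V' f h B \<in> brackets V' E'"
proof -
  have Bu: "\<forall>v. v \<notin> V \<longrightarrow> B v = undefined" and Bp: "\<forall>v\<in>V. B v \<in> players V E"
    and Ba: "\<forall>a\<in>players V E. B a = a" and Bm: "\<forall>x\<in>matches V E. B x \<in> B ` in_nbrs E x"
    using B unfolding brackets_def by auto
  have pV: "players V E \<subseteq> V" by (auto simp: players_def)
  show ?thesis unfolding brackets_def
  proof (intro CollectI conjI allI impI ballI)
    fix v assume "v \<notin> V'" then show "trf V' f h B v = undefined" by (simp add: trf_def)
  next
    fix v assume v: "v \<in> V'"
    then have "B (h v) \<in> players V E" using Bp A2 by blast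
    moreover then have "B (h v) \<in> V" using pV by blast
    ultimately show "trf V' f h B v \<in> players V' E'" using v players_iff by (simp add: trf_def)
  next
    fix a assume a: "a \<in> players V' E'"
    then have aV: "a \<in> V'" by (simp add: players_def)
    then have "h a \<in> players V E" using players_iff[of "h a"] A2 a by simp
    then show "trf V' f h B a = a" using Ba aV A2 by (simp add: trf_def)
  next
    fix x assume x: "x \<in> matches V' E'"
    then have xV: "x \<in> V'" by (simp add: matches_def)
    then have hx: "h x \<in> matches V E" using matches_iff[of "h x"] A2 x by simp
    then obtain u where u: "u \<in> in_nbrs E (h x)" "B (h x) = B u" using Bm by blast
    have uV: "u \<in> V" using u(1) A3 by (auto simp: in_nbrs_def)
    have "f u \<in> in_nbrs E' x" using nbrs[of "h x"] A2 xV u(1) by simp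
    moreover have "trf V' f h B (f u) = trf V' f h B x" using A1 uV xV u(2) by (simp add: trf_def)
    ultimately show "trf V' f h B x \<in> trf V' f h B ` in_nbrs E' x" by (metis image_eqI)
  qed
qed

lemma score_tr:
  assumes X: "X \<in> brackets V E" and B: "B \<in> brackets V E"
  shows "score V' E' (\<lambda>x. \<sigma> (h x)) (trf V' f h X) (trf V' f h B) = score V E \<sigma> X B"
proof -
  have pV: "players V E \<subseteq> V" by (auto simp: players_def)
  have XV: "X v \<in> V" and BV: "B v \<in> V" if "v \<in> V" for v
    using X B that pV unfolding brackets_def by blast+
  have mV: "matches V E \<subseteq> V" and mV': "matches V' E' \<subseteq> V'" by (auto simp: matches_def)
  have seteq: "{x \<in> matches V' E'. trf V' f h X x = trf V' f h B x} = f ` {x \<in> matches V E. X x = B x}"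
  proof (intro set_eqI iffI)
    fix x assume "x \<in> {x \<in> matches V' E'. trf V' f h X x = trf V' f h B x}"
    then have x: "x \<in> matches V' E'" "f (X (h x)) = f (B (h x))" using mV' by (auto simp: trf_def)
    have xV: "x \<in> V'" using x(1) mV' by auto
    have hx: "h x \<in> matches V E" using matches_iff[of "h x"] A2 xV x(1) by simp
    have "X (h x) = B (h x)" using inj x(2) XV BV A2 xV by (meson inj_onD)
    then show "x \<in> f ` {x \<in> matches V E. X x = B x}" using hx A2 xV by (metis (mono_tags, lifting) image_eqI mem_Collect_eq)
  next
    fix x assume "x \<in> f ` {x \<in> matches V E. X x = B x}"
    then obtain v where v: "x = f v" "v \<in> matches V E" "X v = B v" by blast
    have vV: "v \<in> V" using v(2) mV by auto
    then show "x \<in> {x \<in> matches V' E'. trf V' f h X x = trf V' f h B x}" using v A1 matches_iff by (simp add: trf_def)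
  qed
  have injm: "inj_on f {x \<in> matches V E. X x = B x}" using inj mV by (auto intro: inj_on_subset)
  show ?thesis unfolding score_def seteq
    using sum.reindex[OF injm, of "\<lambda>x. \<sigma> (h x)"] A1 mV by (auto intro!: sum.cong)
qed

lemma scoring_tr: "scoring_system V E \<sigma> \<Longrightarrow> scoring_system V' E' (\<lambda>x. \<sigma> (h x))"
  unfolding scoring_system_def
proof
  fix x assume s: "\<forall>x\<in>matches V E. 0 < \<sigma> x" and x: "x \<in> matches V' E'"
  then have "x \<in> V'" by (simp add: matches_def)
  then have "h x \<in> matches V E" using matches_iff[of "h x"] A2 x by simp
  then show "0 < \<sigma> (h x)" using s by blast
qed

lemma tr_tr: assumes B: "B \<in> brackets V E" shows "trf V h f (trf V' f h B) = B"
proof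
  fix v
  have pV: "players V E \<subseteq> V" by (auto simp: players_def)
  show "trf V h f (trf V' f h B) v = B v"
  proof (cases "v \<in> V")
    case True
    then have "B v \<in> V" using B pV unfolding brackets_def by blast
    then show ?thesis using True A1 unfolding trf_def by simp
  next
    case False
    then show ?thesis using B unfolding trf_def brackets_def by simp
  qed
qed

lemma inj_tr: "inj_on (trf V' f h) (brackets V E)"
  by (rule inj_on_inverseI[of _ "trf V h f"]) (rule tr_tr)

lemma res_tr:
  assumes R: "resolving V E \<sigma> S"
  shows "resolving V' E' (\<lambda>x. \<sigma> (h x)) (trf V' f h ` S)"
  unfolding resolving_def
proof (intro conjI ballI impI)
  have SB: "S \<subseteq> brackets V E" using R unfolding resolving_def by blast
  show "trf V' f h ` S \<subseteq> brackets V' E'" using SB tr_br by blast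
  fix B' C' assume B': "B' \<in> brackets V' E'" and C': "C' \<in> brackets V' E'" and ne: "B' \<noteq> C'"
  define B where "B = trf V h f B'"
  define C where "C = trf V h f C'"
  have B: "B \<in> brackets V E" unfolding B_def by (rule tiso.tr_br[OF sym B'])
  have C: "C \<in> brackets V E" unfolding C_def by (rule tiso.tr_br[OF sym C'])
  have trB: "trf V' f h B = B'" unfolding B_def by (rule tiso.tr_tr[OF sym B'])
  have trC: "trf V' f h C = C'" unfolding C_def by (rule tiso.tr_tr[OF sym C'])
  have "B \<noteq> C" using ne trB trC by auto
  then obtain X where X: "X \<in> S" "score V E \<sigma> X B \<noteq> score V E \<sigma> X C"
    using R B C unfolding resolving_def by blast
  have XB: "X \<in> brackets V E" using X(1) SB by blast
  have "score V' E' (\<lambda>x. \<sigma> (h x)) (trf V' f h X) B' \<noteq> score V' E' (\<lambda>x. \<sigma> (h x)) (trf V' f h X) C'"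
    using X(2) score_tr[OF XB B] score_tr[OF XB C] trB trC by simp
  then show "\<exists>Bi\<in>trf V' f h ` S. score V' E' (\<lambda>x. \<sigma> (h x)) Bi B' \<noteq> score V' E' (\<lambda>x. \<sigma> (h x)) Bi C'"
    using X(1) by blast
qed

end

lemma resolving_cong:
  assumes "\<And>x. x \<in> matches V E \<Longrightarrow> \<sigma> x = \<sigma>2 x"
  shows "resolving V E \<sigma> S = resolving V E \<sigma>2 S"
proof -
  have "score V E \<sigma> X B = score V E \<sigma>2 X B" for X B
    unfolding score_def using assms by (intro sum.cong) auto
  then show ?thesis unfolding resolving_def by simp
qed


theorem theorem1p5:
  fixes V :: "'a set" and E :: "('a \<times> 'a) set" and n :: nat
  assumes "standard_tournament V E"
    and "card (players V E) = n"
    and "n \<ge> 2"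
    and "\<exists>k. n = 2 ^ k"
  shows "(\<forall>\<sigma>. scoring_system V E \<sigma> \<longrightarrow> tdim V E \<sigma> = n div 2)
       \<and> (\<exists>S. finite S \<and> card S = n div 2 \<and>
              (\<forall>\<sigma>. scoring_system V E \<sigma> \<longrightarrow> resolving V E \<sigma> S))"
proof -
  obtain k f where EV: "E \<subseteq> V \<times> V" and bij: "bij_betw f V (cbt_nodes k)"
    and iso: "\<forall>u\<in>V. \<forall>v\<in>V. (u, v) \<in> E \<longleftrightarrow> (f u, f v) \<in> cbt_edges"
    using assms(1) unfolding standard_tournament_def by blast
  define h where "h = inv_into V f"
  have injf: "inj_on f V" using bij by (rule bij_betw_imp_inj_on)
  have img: "f ` V = cbt_nodes k" using bij by (rule bij_betw_imp_surj_on)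
  interpret I: tiso V E "cbt_nodes k" "cE k" f h
  proof
    fix v assume v: "v \<in> V"
    show "f v \<in> cbt_nodes k \<and> h (f v) = v" using v img injf unfolding h_def by auto
  next
    fix v' assume v': "v' \<in> cbt_nodes k"
    then have "v' \<in> f ` V" using img by simp
    then show "h v' \<in> V \<and> f (h v') = v'" unfolding h_def by (simp add: inv_into_into f_inv_into_f)
  next
    show "E \<subseteq> V \<times> V" by (rule EV)
    show "cE k \<subseteq> cbt_nodes k \<times> cbt_nodes k" unfolding cE_def by auto
  next
    fix u v assume u: "u \<in> V" and v: "v \<in> V"
    have "f u \<in> cbt_nodes k" "f v \<in> cbt_nodes k" using u v img by auto
    then show "(u, v) \<in> E \<longleftrightarrow> (f u, f v) \<in> cE k" using iso u v unfolding cE_def by auto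
  qed
  interpret J: tiso "cbt_nodes k" "cE k" V E h f by (rule I.sym)
  have pV: "players V E \<subseteq> V" by (auto simp: players_def)
  have "card (players (cbt_nodes k) (cE k)) = card (players V E)"
    unfolding I.players_img using inj_on_subset[OF injf pV] by (rule card_image)
  then have n: "n = 2 ^ k" using assms(2) players_cE[of k] card_len_eq[of k] by simp
  have k1: "1 \<le> k"
  proof (rule ccontr)
    assume "\<not> 1 \<le> k" then have "k = 0" by simp
    then show False using n assms(3) by simp
  qed
  have nd: "n div 2 = 2 ^ (k - 1)"
  proof -
    have "n = 2 * 2 ^ (k - 1)" using n k1 by (metis Suc_diff_le diff_Suc_1 power_Suc)
    then show ?thesis by simp
  qed
  define S' where "S' = Xc k ` LL k"
  define S where "S = trf V h f ` S'"
  have S'B: "S' \<subseteq> brackets (cbt_nodes k) (cE k)"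
    using upper_cE[OF k1, of "\<lambda>_. 1"] unfolding resolving_def S'_def scoring_system_def by simp
  have finS: "finite S" unfolding S_def S'_def using finite_upper by simp
  have cardS: "card S = n div 2"
  proof -
    have "card S = card S'" unfolding S_def by (rule card_image[OF inj_on_subset[OF J.inj_tr S'B]])
    then show ?thesis unfolding S'_def using card_upper[OF k1] nd by simp
  qed
  have univ: "resolving V E \<sigma> S" if sc: "scoring_system V E \<sigma>" for \<sigma>
  proof -
    have "scoring_system (cbt_nodes k) (cE k) (\<lambda>x. \<sigma> (h x))" by (rule I.scoring_tr[OF sc])
    then have "resolving (cbt_nodes k) (cE k) (\<lambda>x. \<sigma> (h x)) S'" unfolding S'_def by (rule upper_cE[OF k1])
    then have "resolving V E (\<lambda>x. \<sigma> (h (f x))) S" unfolding S_def by (rule J.res_tr)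
    moreover have "\<sigma> (h (f x)) = \<sigma> x" if "x \<in> matches V E" for x
      using that I.A1 by (simp add: matches_def)
    ultimately show ?thesis using resolving_cong[of V E "\<lambda>x. \<sigma> (h (f x))" \<sigma> S] by simp
  qed
  have dim: "tdim V E \<sigma> = n div 2" if sc: "scoring_system V E \<sigma>" for \<sigma>
    unfolding tdim_def
  proof (rule Least_equality)
    show "\<exists>S. finite S \<and> card S = n div 2 \<and> resolving V E \<sigma> S" using finS cardS univ[OF sc] by blast
  next
    fix m assume "\<exists>S. finite S \<and> card S = m \<and> resolving V E \<sigma> S"
    then obtain T where T: "finite T" "card T = m" "resolving V E \<sigma> T" by blast
    have TB: "T \<subseteq> brackets V E" using T(3) unfolding resolving_def by blast
    have r: "resolving (cbt_nodes k) (cE k) (\<lambda>x. \<sigma> (h x)) (trf (cbt_nodes k) f h ` T)"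
      by (rule I.res_tr[OF T(3)])
    have "card (trf (cbt_nodes k) f h ` T) = card T"
      by (rule card_image[OF inj_on_subset[OF I.inj_tr TB]])
    moreover have "finite (trf (cbt_nodes k) f h ` T)" using T(1) by simp
    ultimately have "2 ^ (k - 1) \<le> card T" using lower_cE[OF k1 r] by simp
    then show "n div 2 \<le> m" using nd T(2) by simp
  qed
  show ?thesis using dim univ finS cardS by blast
qed


end
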